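(* Let $P\subset\mathbb{R}^d$ be a finite dataset with $|P|=n$, let $s$ be the number of compute nodes, $t<s$, $\delta>0$, and let $A\in\{0,1\}^{s\times n}$ (columns indexed by the points of $P$) satisfy the straggler-resilience property with parameter $\delta$. For $i\in[s]$ let $P_i$ be the set of points of $P$ whose column has a $1$ in row $i$. Let $\mathcal{R}\subseteq[s]$ with $|\mathcal{R}|\ge s-t$ be the set of non-straggling nodes and $\mathbf{b}=(b_i)_{i\in\mathcal{R}}$ a corresponding non-negative recovery vector. For each $i\in\mathcal{R}$ let $Y_i$ be an optimal set of $k$ $k$-median centers for $P_i$, with weights $w_i(\mathbf{c})=|\mathrm{cluster}(\mathbf{c},P_i)|$ for $\mathbf{c}\in Y_i$. Let $Y=\bigcup_{i\in\mathcal{R}}Y_i$ with weight $w(\mathbf{c})=\sum_{i\in\mathcal{R}:\,\mathbf{c}\in Y_i}b_i w_i(\mathbf{c})$, and let $\widehat{C}$ be an optimal set of $k$ centers for the weighted $k$-median problem on $(Y,w)$. If $C^*$ is an optimal set of $k$-median centers for $P$, then $$\mathrm{cost}(P,\widehat{C})\le 3(1+\delta)\,\mathrm{cost}(P,C^* ).$$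
   Context: $d(\mathbf{x},C)=\min_{\mathbf{c}\in C}\|\mathbf{x}-\mathbf{c}\|_2$. The $k$-median cost is $\mathrm{cost}(Q,C)=\sum_{\mathbf{q}\in Q}d(\mathbf{q},C)$ and the weighted version is $\mathrm{cost}(Q,C,w)=\sum_{\mathbf{q}\in Q}w(\mathbf{q})d(\mathbf{q},C)$; optimal centers are minimizers over all sets of $k$ points in $\mathbb{R}^d$. $\mathrm{cluster}(\mathbf{c},P_i)$ is the set of points of $P_i$ whose closest center in $Y_i$ is $\mathbf{c}$ (ties broken arbitrarily so clusters partition $P_i$). Straggler-resilience property with parameter $\delta$: for every $\mathcal{R}\subseteq[s]$ with $|\mathcal{R}|\ge s-t$, letting $A_{\mathcal{R}}$ be the rows of $A$ indexed by $\mathcal{R}$, there is $\mathbf{b}\in\mathbb{R}^{|\mathcal{R}|}$ with non-negative entries (a recovery vector) such that $\mathbf{b}^TA_{\mathcal{R}}=(a_1,\ldots,a_n)$ with $1\le a_j\le1+\delta$ for all $j$. *)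

theory Defs
  imports "HOL-Analysis.Analysis"
begin

definition dist_to :: "'a::euclidean_space \<Rightarrow> 'a set \<Rightarrow> real" where
  "dist_to x C = Min ((\<lambda>c. norm (x - c)) ` C)"

definition kcost :: "'a::euclidean_space set \<Rightarrow> 'a set \<Rightarrow> real" where
  "kcost Q C = (\<Sum>q\<in>Q. dist_to q C)"

definition wkcost :: "'a::euclidean_space set \<Rightarrow> 'a set \<Rightarrow> ('a \<Rightarrow> real) \<Rightarrow> real" where
  "wkcost Q C w = (\<Sum>q\<in>Q. w q * dist_to q C)"

definition opt_kmedian :: "nat \<Rightarrow> 'a::euclidean_space set \<Rightarrow> 'a set \<Rightarrow> bool" where
  "opt_kmedian k Q C \<longleftrightarrow> finite C \<and> card C = k \<and>
     (\<forall>C'. finite C' \<and> card C' = k \<longrightarrow> kcost Q C \<le> kcost Q C')"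

definition opt_wkmedian :: "nat \<Rightarrow> 'a::euclidean_space set \<Rightarrow> ('a \<Rightarrow> real) \<Rightarrow> 'a set \<Rightarrow> bool" where
  "opt_wkmedian k Q w C \<longleftrightarrow> finite C \<and> card C = k \<and>
     (\<forall>C'. finite C' \<and> card C' = k \<longrightarrow> wkcost Q C w \<le> wkcost Q C' w)"

definition recovery_vector :: "(nat \<Rightarrow> 'a \<Rightarrow> real) \<Rightarrow> 'a set \<Rightarrow> real \<Rightarrow> nat set \<Rightarrow> (nat \<Rightarrow> real) \<Rightarrow> bool" where
  "recovery_vector A P \<delta> R b \<longleftrightarrow> (\<forall>i\<in>R. 0 \<le> b i) \<and>
     (\<forall>p\<in>P. 1 \<le> (\<Sum>i\<in>R. b i * A i p) \<and> (\<Sum>i\<in>R. b i * A i p) \<le> 1 + \<delta>)"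

definition straggler_resilient :: "(nat \<Rightarrow> 'a \<Rightarrow> real) \<Rightarrow> 'a set \<Rightarrow> nat \<Rightarrow> nat \<Rightarrow> real \<Rightarrow> bool" where
  "straggler_resilient A P s t \<delta> \<longleftrightarrow>
     (\<forall>R. R \<subseteq> {1..s} \<and> card R \<ge> s - t \<longrightarrow> (\<exists>b. recovery_vector A P \<delta> R b))"

text \<open>cluster(c, Q) w.r.t. a tie-breaking assignment sigma of points to their closest centers.\<close>
definition cluster :: "('a \<Rightarrow> 'a) \<Rightarrow> 'a \<Rightarrow> 'a set \<Rightarrow> 'a set" where
  "cluster \<sigma> c Q = {p\<in>Q. \<sigma> p = c}"

end

theory Submission
  imports Defs
begin

lemma dist_to_nonneg: "finite C \<Longrightarrow> C \<noteq> {} \<Longrightarrow> 0 \<le> dist_to x C"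
  unfolding dist_to_def by (simp add: Min_ge_iff)

lemma dist_to_le: "finite C \<Longrightarrow> c \<in> C \<Longrightarrow> dist_to x C \<le> norm (x - c)"
  unfolding dist_to_def by (simp add: Min_le_iff)

lemma dist_to_tri:
  assumes "finite C" "C \<noteq> {}"
  shows "dist_to x C \<le> norm (x - y) + dist_to y C"
proof -
  have "dist_to y C \<in> (\<lambda>c. norm (y - c)) ` C"
    unfolding dist_to_def using assms by (intro Min_in) auto
  then obtain c where c: "c \<in> C" "dist_to y C = norm (y - c)" by auto
  have "dist_to x C \<le> norm (x - c)" using dist_to_le[OF assms(1) c(1)] .
  also have "\<dots> \<le> norm (x - y) + norm (y - c)" using norm_triangle_ineq[of "x - y" "y - c"] by simp
  finally show ?thesis using c by simp
qed

lemma fiber_sum: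
  fixes f :: "'a \<Rightarrow> real"
  assumes "finite Q" "finite Yi" "\<forall>p\<in>Q. \<sigma> p \<in> Yi"
  shows "(\<Sum>c\<in>Yi. real (card (cluster \<sigma> c Q)) * f c) = (\<Sum>p\<in>Q. f (\<sigma> p))"
proof -
  have "(\<Sum>p\<in>Q. f (\<sigma> p)) = (\<Sum>p\<in>Q. \<Sum>c\<in>Yi. if \<sigma> p = c then f c else 0)"
    using assms by (intro sum.cong) (auto simp: sum.delta)
  also have "\<dots> = (\<Sum>c\<in>Yi. \<Sum>p\<in>Q. if \<sigma> p = c then f c else 0)"
    by (rule sum.swap)
  also have "\<dots> = (\<Sum>c\<in>Yi. real (card (cluster \<sigma> c Q)) * f c)"
  proof (intro sum.cong refl)
    fix c
    have "(\<Sum>p\<in>Q. if \<sigma> p = c then f c else 0) = (\<Sum>p\<in>{p\<in>Q. \<sigma> p = c}. f c)"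
      using assms(1) by (simp add: sum.inter_filter[symmetric])
    then show "(\<Sum>p\<in>Q. if \<sigma> p = c then f c else 0) = real (card (cluster \<sigma> c Q)) * f c"
      by (simp add: cluster_def)
  qed
  finally show ?thesis by simp
qed

lemma wk_expand:
  fixes W :: "nat \<Rightarrow> 'a::euclidean_space \<Rightarrow> real"
  assumes "finite R" "\<forall>i\<in>R. finite (Y i)"
  shows "wkcost (\<Union>i\<in>R. Y i) C (\<lambda>c. \<Sum>i\<in>{i\<in>R. c \<in> Y i}. b i * W i c)
       = (\<Sum>i\<in>R. b i * (\<Sum>c\<in>Y i. W i c * dist_to c C))"
proof -
  let ?U = "\<Union>i\<in>R. Y i"
  have fU: "finite ?U" using assms by auto
  have "wkcost ?U C (\<lambda>c. \<Sum>i\<in>{i\<in>R. c \<in> Y i}. b i * W i c)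
     = (\<Sum>c\<in>?U. \<Sum>i\<in>R. if c \<in> Y i then b i * W i c * dist_to c C else 0)"
    unfolding wkcost_def using assms(1)
    by (intro sum.cong refl) (simp add: sum.inter_filter[symmetric] sum_distrib_right)
  also have "\<dots> = (\<Sum>i\<in>R. \<Sum>c\<in>?U. if c \<in> Y i then b i * W i c * dist_to c C else 0)"
    by (rule sum.swap)
  also have "\<dots> = (\<Sum>i\<in>R. b i * (\<Sum>c\<in>Y i. W i c * dist_to c C))"
  proof (intro sum.cong refl)
    fix i assume i: "i \<in> R"
    have "(\<Sum>c\<in>?U. if c \<in> Y i then b i * W i c * dist_to c C else 0)
        = (\<Sum>c\<in>{c\<in>?U. c \<in> Y i}. b i * W i c * dist_to c C)"
      using fU by (simp only: sum.inter_filter[symmetric])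
    also have "{c\<in>?U. c \<in> Y i} = Y i" using i by auto
    finally show "(\<Sum>c\<in>?U. if c \<in> Y i then b i * W i c * dist_to c C else 0)
        = b i * (\<Sum>c\<in>Y i. W i c * dist_to c C)"
      by (simp add: sum_distrib_left mult.assoc)
  qed
  finally show ?thesis .
qed

theorem theorem2:
  fixes P :: "'a::euclidean_space set"
    and A :: "nat \<Rightarrow> 'a \<Rightarrow> real"
    and s t k :: nat and \<delta> :: real
    and R :: "nat set" and b :: "nat \<Rightarrow> real"
    and Y :: "nat \<Rightarrow> 'a set" and \<sigma> :: "nat \<Rightarrow> 'a \<Rightarrow> 'a"
    and Chat Cstar :: "'a set"
  assumes "finite P" and "0 < k"
    and "t < s" and "0 < \<delta>"
    and A01: "\<forall>i\<in>{1..s}. \<forall>p\<in>P. A i p \<in> {0, 1}"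
    and "straggler_resilient A P s t \<delta>"
    and "R \<subseteq> {1..s}" and "card R \<ge> s - t"
    and "recovery_vector A P \<delta> R b"
    and Yopt: "\<forall>i\<in>R. opt_kmedian k {p\<in>P. A i p = 1} (Y i)"
    and \<sigma>: "\<forall>i\<in>R. \<forall>p\<in>{p\<in>P. A i p = 1}. \<sigma> i p \<in> Y i \<and> norm (p - \<sigma> i p) = dist_to p (Y i)"
    and "opt_wkmedian k (\<Union>i\<in>R. Y i)
           (\<lambda>c. \<Sum>i\<in>{i\<in>R. c \<in> Y i}. b i * real (card (cluster (\<sigma> i) c {p\<in>P. A i p = 1})))
           Chat"
    and "opt_kmedian k P Cstar"
  shows "kcost P Chat \<le> 3 * (1 + \<delta>) * kcost P Cstar"
proof -
  define Pi where "Pi i = {p\<in>P. A i p = 1}" for i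
  define F where "F i C = (\<Sum>p\<in>Pi i. dist_to p C)" for i C
  define G where "G i C = (\<Sum>p\<in>Pi i. dist_to (\<sigma> i p) C)" for i C
  define W where "W i c = real (card (cluster (\<sigma> i) c (Pi i)))" for i c
  have fR: "finite R" using assms(7) finite_subset by blast
  have fP: "\<And>i. finite (Pi i)" using assms(1) unfolding Pi_def by auto
  have b0: "\<forall>i\<in>R. 0 \<le> b i" using assms(9) unfolding recovery_vector_def by auto
  have fY: "\<forall>i\<in>R. finite (Y i) \<and> Y i \<noteq> {}"
    using Yopt assms(2) unfolding opt_kmedian_def by (auto simp: Pi_def)
  have Cs: "finite Cstar" "card Cstar = k" "Cstar \<noteq> {}"
    using assms(13,2) unfolding opt_kmedian_def by auto
  have Ch: "finite Chat" "card Chat = k" "Chat \<noteq> {}"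
    using assms(12,2) unfolding opt_wkmedian_def by auto
  have sumA: "(\<Sum>p\<in>P. (\<Sum>i\<in>R. b i * A i p) * g p) = (\<Sum>i\<in>R. b i * (\<Sum>p\<in>Pi i. g p))"
    for g :: "'a \<Rightarrow> real"
  proof -
    have "(\<Sum>p\<in>P. (\<Sum>i\<in>R. b i * A i p) * g p) = (\<Sum>i\<in>R. \<Sum>p\<in>P. b i * (A i p * g p))"
      by (subst sum.swap) (simp add: sum_distrib_right mult.assoc)
    also have "\<dots> = (\<Sum>i\<in>R. b i * (\<Sum>p\<in>Pi i. g p))"
    proof (intro sum.cong refl)
      fix i assume i: "i \<in> R"
      have "(\<Sum>p\<in>P. A i p * g p) = (\<Sum>p\<in>P. if A i p = 1 then g p else 0)"
        using A01 i assms(7) by (intro sum.cong refl) auto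
      also have "\<dots> = (\<Sum>p\<in>Pi i. g p)" using assms(1) by (simp add: sum.inter_filter Pi_def)
      finally show "(\<Sum>p\<in>P. b i * (A i p * g p)) = b i * (\<Sum>p\<in>Pi i. g p)"
        by (simp add: sum_distrib_left[symmetric])
    qed
    finally show ?thesis .
  qed
  have wk: "wkcost (\<Union>i\<in>R. Y i) C (\<lambda>c. \<Sum>i\<in>{i\<in>R. c \<in> Y i}. b i * W i c)
       = (\<Sum>i\<in>R. b i * G i C)" for C
  proof -
    have "wkcost (\<Union>i\<in>R. Y i) C (\<lambda>c. \<Sum>i\<in>{i\<in>R. c \<in> Y i}. b i * W i c)
       = (\<Sum>i\<in>R. b i * (\<Sum>c\<in>Y i. W i c * dist_to c C))"
      using wk_expand[OF fR] fY by blast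
    also have "\<dots> = (\<Sum>i\<in>R. b i * G i C)"
      unfolding W_def G_def
    proof (intro sum.cong refl)
      fix i assume i: "i \<in> R"
      have "(\<Sum>c\<in>Y i. real (card (cluster (\<sigma> i) c (Pi i))) * dist_to c C) = (\<Sum>p\<in>Pi i. dist_to (\<sigma> i p) C)"
        by (rule fiber_sum) (use fP fY \<sigma> i in \<open>auto simp: Pi_def\<close>)
      then show "b i * (\<Sum>c\<in>Y i. real (card (cluster (\<sigma> i) c (Pi i))) * dist_to c C) = b i * (\<Sum>p\<in>Pi i. dist_to (\<sigma> i p) C)"
        by simp
    qed
    finally show ?thesis .
  qed
  have "wkcost (\<Union>i\<in>R. Y i) Chat (\<lambda>c. \<Sum>i\<in>{i\<in>R. c \<in> Y i}. b i * W i c)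
      \<le> wkcost (\<Union>i\<in>R. Y i) Cstar (\<lambda>c. \<Sum>i\<in>{i\<in>R. c \<in> Y i}. b i * W i c)"
    using assms(12) Cs unfolding opt_wkmedian_def W_def Pi_def by blast
  then have wkle: "(\<Sum>i\<in>R. b i * G i Chat) \<le> (\<Sum>i\<in>R. b i * G i Cstar)"
    using wk[of Chat] wk[of Cstar] by (simp add: wkcost_def)
  have step1: "kcost P Chat \<le> (\<Sum>i\<in>R. b i * F i Chat)"
  proof -
    have "kcost P Chat \<le> (\<Sum>p\<in>P. (\<Sum>i\<in>R. b i * A i p) * dist_to p Chat)"
      unfolding kcost_def
    proof (rule sum_mono)
      fix p assume "p \<in> P"
      then have "1 \<le> (\<Sum>i\<in>R. b i * A i p)" using assms(9) unfolding recovery_vector_def by auto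
      moreover have "0 \<le> dist_to p Chat" using dist_to_nonneg Ch by blast
      ultimately show "dist_to p Chat \<le> (\<Sum>i\<in>R. b i * A i p) * dist_to p Chat"
        by (metis mult_1 mult_right_mono)
    qed
    then show ?thesis using sumA unfolding F_def by simp
  qed
  have FY: "F i (Y i) \<le> F i Cstar" if "i \<in> R" for i
    using Yopt that Cs unfolding opt_kmedian_def F_def kcost_def Pi_def by blast
  have Feq: "F i (Y i) = (\<Sum>p\<in>Pi i. norm (p - \<sigma> i p))" if "i \<in> R" for i
    unfolding F_def using \<sigma> that by (intro sum.cong refl) (auto simp: Pi_def)
  have s2: "F i Chat \<le> F i (Y i) + G i Chat" if "i \<in> R" for i
  proof -
    have "F i Chat \<le> (\<Sum>p\<in>Pi i. norm (p - \<sigma> i p) + dist_to (\<sigma> i p) Chat)"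
      unfolding F_def by (intro sum_mono dist_to_tri Ch)
    then show ?thesis using Feq[OF that] unfolding G_def by (simp add: sum.distrib)
  qed
  have s3: "G i Cstar \<le> F i (Y i) + F i Cstar" if "i \<in> R" for i
  proof -
    have "G i Cstar \<le> (\<Sum>p\<in>Pi i. norm (\<sigma> i p - p) + dist_to p Cstar)"
      unfolding G_def by (intro sum_mono dist_to_tri Cs)
    then show ?thesis using Feq[OF that] unfolding F_def by (simp add: sum.distrib norm_minus_commute)
  qed
  have "kcost P Chat \<le> (\<Sum>i\<in>R. b i * F i (Y i)) + (\<Sum>i\<in>R. b i * G i Chat)"
  proof -
    have "(\<Sum>i\<in>R. b i * F i Chat) \<le> (\<Sum>i\<in>R. b i * F i (Y i) + b i * G i Chat)"
      using s2 b0 by (intro sum_mono) (simp add: distrib_left[symmetric] mult_left_mono)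
    then show ?thesis using step1 by (simp add: sum.distrib)
  qed
  also have "\<dots> \<le> (\<Sum>i\<in>R. b i * F i (Y i)) + (\<Sum>i\<in>R. b i * G i Cstar)"
    using wkle by simp
  also have "\<dots> \<le> (\<Sum>i\<in>R. 3 * (b i * F i Cstar))"
    unfolding sum.distrib[symmetric]
  proof (rule sum_mono)
    fix i assume i: "i \<in> R"
    have "b i * F i (Y i) \<le> b i * F i Cstar" using FY[OF i] b0 i by (simp add: mult_left_mono)
    moreover have "b i * G i Cstar \<le> b i * (F i (Y i) + F i Cstar)"
      using s3[OF i] b0 i by (simp add: mult_left_mono)
    ultimately show "b i * F i (Y i) + b i * G i Cstar \<le> 3 * (b i * F i Cstar)"
      by (simp add: distrib_left)
  qed
  also have "\<dots> = 3 * (\<Sum>p\<in>P. (\<Sum>i\<in>R. b i * A i p) * dist_to p Cstar)"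
    by (simp add: sumA sum_distrib_left[symmetric] F_def)
  also have "\<dots> \<le> 3 * (\<Sum>p\<in>P. (1 + \<delta>) * dist_to p Cstar)"
  proof -
    have "(\<Sum>p\<in>P. (\<Sum>i\<in>R. b i * A i p) * dist_to p Cstar) \<le> (\<Sum>p\<in>P. (1 + \<delta>) * dist_to p Cstar)"
    proof (rule sum_mono)
      fix p assume "p \<in> P"
      then have "(\<Sum>i\<in>R. b i * A i p) \<le> 1 + \<delta>" using assms(9) unfolding recovery_vector_def by auto
      moreover have "0 \<le> dist_to p Cstar" using dist_to_nonneg Cs by blast
      ultimately show "(\<Sum>i\<in>R. b i * A i p) * dist_to p Cstar \<le> (1 + \<delta>) * dist_to p Cstar"
        by (rule mult_right_mono)
    qed
    then show ?thesis by simp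
  qed
  also have "\<dots> = 3 * (1 + \<delta>) * kcost P Cstar"
    by (simp add: kcost_def sum_distrib_left[symmetric])
  finally show ?thesis .
qed

end
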